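(* Let $\langle A, \leq, \otimes, \ominus, \mathbf{1}\rangle$ be a residuated partially ordered monoid with bottom element $\bot$, let $k\geq 1$ and $a = a_1\ldots a_k$, $b = b_1\ldots b_k \in Lex_k(A)$. If $\delta(a,b) = \gamma(a,b) = k+1$, then the residuation $a \ominus_k b$ of $a$ by $b$ in $\langle Lex_k(A), \leq_k, \otimes^k, \mathbf{1}^k\rangle$ exists and equals $(a_1 \ominus b_1) \ldots (a_k \ominus b_k)$; that is, this tuple lies in $Lex_k(A)$ and for every $c \in Lex_k(A)$, $b \otimes^k c \leq_k a$ iff $c \leq_k (a_1 \ominus b_1) \ldots (a_k \ominus b_k)$.
   Context: A residuated partially ordered monoid $\langle A, \leq, \otimes, \ominus, \mathbf{1}\rangle$ consists of a partial order $\langle A,\leq\rangle$, a commutative monoid $\langle A,\otimes,\mathbf{1}\rangle$, and a binary operation $\ominus$ with $b \otimes c \leq a$ iff $c \leq a \ominus b$ for all $a,b,c\in A$. $a<b$ means $a\leq b$, $a\neq b$. $I(A) = \{c \in A \mid \forall a,b \in A.\ a \otimes c = b \otimes c \Rightarrow a = b\}$, $C(A)=A\setminus I(A)$. $Lex_k(A)\subseteq A^k$: $Lex_1(A) = A$, $Lex_{k+1}(A) = I(A)\, Lex_k(A) \cup C(A)\{\bot\}^k$ (concatenations of sequences; $\{\bot\}^k$ the singleton of $k$ copies of $\bot$). The order $\leq_k$: $\leq_1=\leq$, and for $k\geq2$, $a_1 \ldots a_k \leq_k b_1 \ldots b_k$ iff $a_1 < b_1$, or $a_1 = b_1$ and $a_2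 \ldots a_k \leq_{k-1} b_2 \ldots b_k$. $\otimes^k$ is componentwise, $\mathbf{1}^k=\mathbf{1}\ldots\mathbf{1}$. For $a,b\in Lex_k(A)$: $\gamma(a,b) = \min\{ i \mid a_i \ominus b_i \in C(A)\}$ and $\delta(a,b) = \min\{ i \mid (a_i \ominus b_i) \otimes b_i < a_i\}$, each equal to $k+1$ if the set is empty. *)

theory Defs
  imports Main
begin

definition rpom :: "('a \<Rightarrow> 'a \<Rightarrow> bool) \<Rightarrow> ('a \<Rightarrow> 'a \<Rightarrow> 'a) \<Rightarrow> ('a \<Rightarrow> 'a \<Rightarrow> 'a) \<Rightarrow> 'a \<Rightarrow> bool" where
  "rpom le mult res one \<longleftrightarrow>
     (\<forall>a. le a a) \<and> (\<forall>a b. le a b \<and> le b a \<longrightarrow> a = b) \<and>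
     (\<forall>a b c. le a b \<and> le b c \<longrightarrow> le a c) \<and>
     (\<forall>a b c. mult (mult a b) c = mult a (mult b c)) \<and>
     (\<forall>a b. mult a b = mult b a) \<and> (\<forall>a. mult a one = a) \<and>
     (\<forall>a b c. le (mult b c) a \<longleftrightarrow> le c (res a b))"

definition is_bot :: "('a \<Rightarrow> 'a \<Rightarrow> bool) \<Rightarrow> 'a \<Rightarrow> bool" where
  "is_bot le bt \<longleftrightarrow> (\<forall>a. le bt a)"

definition Icanc :: "('a \<Rightarrow> 'a \<Rightarrow> 'a) \<Rightarrow> 'a set" where
  "Icanc mult = {c. \<forall>a b. mult a c = mult b c \<longrightarrow> a = b}"

definition Cnon :: "('a \<Rightarrow> 'a \<Rightarrow> 'a) \<Rightarrow> 'a set" where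
  "Cnon mult = UNIV - Icanc mult"

text \<open>Lex_k(A) as a set of lists of length k. Lex 0 = {[]} is an auxiliary base
  case; with it Lex 1 = all singletons, agreeing with Lex_1(A) = A.\<close>
fun Lex :: "('a \<Rightarrow> 'a \<Rightarrow> 'a) \<Rightarrow> 'a \<Rightarrow> nat \<Rightarrow> 'a list set" where
  "Lex mult bt 0 = {[]}"
| "Lex mult bt (Suc k) =
     {c # s | c s. c \<in> Icanc mult \<and> s \<in> Lex mult bt k}
     \<union> {c # replicate k bt | c. c \<in> Cnon mult}"

fun lexle :: "('a \<Rightarrow> 'a \<Rightarrow> bool) \<Rightarrow> 'a list \<Rightarrow> 'a list \<Rightarrow> bool" where
  "lexle le [] [] = True"
| "lexle le (a # as) (b # bs) = ((le a b \<and> a \<noteq> b) \<or> (a = b \<and> lexle le as bs))"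
| "lexle le _ _ = False"

text \<open>gamma and delta, with 1-based indices; value k+1 if no such index.\<close>
definition gamma :: "('a \<Rightarrow> 'a \<Rightarrow> 'a) \<Rightarrow> ('a \<Rightarrow> 'a \<Rightarrow> 'a) \<Rightarrow> 'a list \<Rightarrow> 'a list \<Rightarrow> nat" where
  "gamma mult res a b =
     (if \<exists>i<length a. res (a ! i) (b ! i) \<in> Cnon mult
      then Suc (LEAST i. i < length a \<and> res (a ! i) (b ! i) \<in> Cnon mult)
      else length a + 1)"

definition delta :: "('a \<Rightarrow> 'a \<Rightarrow> bool) \<Rightarrow> ('a \<Rightarrow> 'a \<Rightarrow> 'a) \<Rightarrow> ('a \<Rightarrow> 'a \<Rightarrow> 'a) \<Rightarrow> 'a list \<Rightarrow> 'a list \<Rightarrow> nat" where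
  "delta le mult res a b =
     (let lt = (\<lambda>x y. le x y \<and> x \<noteq> y) in
     (if \<exists>i<length a. lt (mult (res (a ! i) (b ! i)) (b ! i)) (a ! i)
      then Suc (LEAST i. i < length a \<and> lt (mult (res (a ! i) (b ! i)) (b ! i)) (a ! i))
      else length a + 1))"

end

theory Submission
  imports Defs
begin

fun Qb :: "('a \<Rightarrow> 'a \<Rightarrow> 'a) \<Rightarrow> 'a \<Rightarrow> 'a list \<Rightarrow> bool" where
  "Qb mult bt [] = True"
| "Qb mult bt (x # xs) = ((x \<in> Cnon mult \<longrightarrow> xs = replicate (length xs) bt) \<and> Qb mult bt xs)"

lemma Qb_rep: "Qb mult bt (replicate n bt)"
  by (induction n) auto

lemma Lex_len: "x \<in> Lex mult bt k \<Longrightarrow> length x = k"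
  by (induction k arbitrary: x) auto

lemma Lex_Q: "x \<in> Lex mult bt k \<Longrightarrow> Qb mult bt x"
  by (induction k arbitrary: x) (auto simp: Qb_rep Cnon_def dest: Lex_len)

lemma Lex_allI: "length x = k \<Longrightarrow> set x \<subseteq> Icanc mult \<Longrightarrow> x \<in> Lex mult bt k"
proof (induction k arbitrary: x)
  case 0 then show ?case by simp
next
  case (Suc k) then show ?case by (cases x) auto
qed

lemma lexle_refl: "lexle le xs xs"
  by (induction xs) auto

lemma rpomD:
  assumes "rpom le mult res one"
  shows "\<And>x. le x x" "\<And>x y. le x y \<Longrightarrow> le y x \<Longrightarrow> x = y"
    "\<And>x y. mult x y = mult y x" "\<And>x y z. mult (mult x y) z = mult x (mult y z)"
    "\<And>x y z. le (mult y z) x \<longleftrightarrow> le z (res x y)"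
  using assms[unfolded rpom_def] by (elim conjE; blast)+

lemma bt_mult:
  assumes "rpom le mult res one" "is_bot le bt"
  shows "mult x bt = bt"
proof -
  have "le bt (res bt x)" using assms(2) unfolding is_bot_def by blast
  then have "le (mult x bt) bt" using rpomD(5)[OF assms(1)] by blast
  moreover have "le bt (mult x bt)" using assms(2) unfolding is_bot_def by blast
  ultimately show ?thesis using rpomD(2)[OF assms(1)] by blast
qed

lemma map2_bt:
  assumes "rpom le mult res one" "is_bot le bt" "length c = n"
  shows "map2 mult (replicate n bt) c = replicate n bt"
  using assms(3)
proof (induction c arbitrary: n)
  case Nil then show ?case by simp
next
  case (Cons x c)
  show ?case
  proof -
    have "mult bt x = bt" using bt_mult[OF assms(1,2), of x] rpomD(3)[OF assms(1), of bt x] by simp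
    then show ?thesis using Cons by (cases n) auto
  qed
qed

lemma main:
  assumes R: "rpom le mult res one" and B: "is_bot le bt"
  shows "length b = length a \<Longrightarrow> length c = length a \<Longrightarrow>
    (\<forall>i<length a. mult (res (a!i) (b!i)) (b!i) = a!i \<and> res (a!i) (b!i) \<in> Icanc mult) \<Longrightarrow>
    Qb mult bt a \<Longrightarrow> Qb mult bt b \<Longrightarrow>
    lexle le (map2 mult b c) a = lexle le c (map2 res a b)"
proof (induction a arbitrary: b c)
  case Nil then show ?case by simp
next
  case (Cons a1 a')
  obtain b1 b' where b: "b = b1 # b'" using Cons.prems(1) by (cases b) auto
  obtain c1 c' where c: "c = c1 # c'" using Cons.prems(2) by (cases c) auto
  define r1 where "r1 = res a1 b1"
  have comp: "\<forall>i<length a'. mult (res (a'!i) (b'!i)) (b'!i) = a'!i \<and> res (a'!i) (b'!i) \<in> Icanc mult"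
    using Cons.prems(3) b by auto
  have h1: "mult r1 b1 = a1" and h2: "r1 \<in> Icanc mult" using Cons.prems(3) b r1_def by auto
  have comm: "\<And>x y. mult x y = mult y x" and assoc: "\<And>x y z. mult (mult x y) z = mult x (mult y z)"
    and resid: "\<And>x y z. le (mult y z) x \<longleftrightarrow> le z (res x y)"
    using rpomD[OF R] by blast+
  have IH: "lexle le (map2 mult b' c') a' = lexle le c' (map2 res a' b')"
    using Cons.IH[of b' c'] Cons.prems b c comp by auto
  show ?case
  proof (cases "c1 = r1")
    case True
    then have "mult b1 c1 = a1" using h1 comm[of b1 r1] by simp
    then show ?thesis using IH True b c r1_def by simp
  next
    case False
    note F = False
    show ?thesis
    proof (cases "mult b1 c1 = a1")
      case False
      then show ?thesis using F b c r1_def resid by auto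
    next
      case True
      have "mult c1 b1 = mult r1 b1" using True h1 comm[of c1 b1] by simp
      then have b1C: "b1 \<in> Cnon mult"
        using F unfolding Cnon_def Icanc_def by blast
      then obtain x y where xy: "x \<noteq> y" "mult x b1 = mult y b1"
        unfolding Cnon_def Icanc_def by blast
      have "mult x a1 = mult r1 (mult x b1)"
        using h1[symmetric] assoc[of x r1 b1] assoc[of r1 x b1] comm[of x r1] by simp
      also have "\<dots> = mult r1 (mult y b1)" using xy by simp
      also have "\<dots> = mult y a1" 
        using h1[symmetric] assoc[of y r1 b1] assoc[of r1 y b1] comm[of y r1] by simp
      finally have "mult x a1 = mult y a1" .
      then have a1C: "a1 \<in> Cnon mult"
        using xy unfolding Cnon_def Icanc_def by blast
      have a': "a' = replicate (length a') bt" using a1C Cons.prems(4) by simp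
      have b': "b' = replicate (length a') bt" using b1C Cons.prems(5) b Cons.prems(1) by simp
      have "map2 mult b' c' = replicate (length a') bt"
        using b' map2_bt[OF R B, of c' "length a'"] Cons.prems(2) c by simp
      then have L: "lexle le (map2 mult b' c') a'" using a' lexle_refl[of le a'] by simp
      have "le (mult b1 c1) a1" using True rpomD(1)[OF R] by simp
      then have "le c1 r1" using resid r1_def by blast
      then show ?thesis using L F True b c r1_def by simp
    qed
  qed
qed

theorem proposition2:
  fixes le :: "'a \<Rightarrow> 'a \<Rightarrow> bool" and mult res :: "'a \<Rightarrow> 'a \<Rightarrow> 'a"
    and one bt :: 'a and k :: nat and a b :: "'a list"
  assumes "rpom le mult res one"
    and "is_bot le bt"
    and "k \<ge> 1"
    and "a \<in> Lex mult bt k" and "b \<in> Lex mult bt k"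
    and "delta le mult res a b = k + 1"
    and "gamma mult res a b = k + 1"
  shows "map2 res a b \<in> Lex mult bt k \<and>
         (\<forall>c \<in> Lex mult bt k. lexle le (map2 mult b c) a \<longleftrightarrow> lexle le c (map2 res a b))"
proof -
  have la: "length a = k" using Lex_len[OF assms(4)] .
  have lb: "length b = k" using Lex_len[OF assms(5)] .
  have resid: "\<And>x y z. le (mult y z) x \<longleftrightarrow> le z (res x y)"
    and comm: "\<And>x y. mult x y = mult y x"
    and refl: "\<And>x. le x x"
    by (rule rpomD[OF assms(1)])+
  have nog: "\<not> (\<exists>i<length a. res (a ! i) (b ! i) \<in> Cnon mult)"
  proof
    assume ex: "\<exists>i<length a. res (a ! i) (b ! i) \<in> Cnon mult"
    then have "(LEAST i. i < length a \<and> res (a ! i) (b ! i) \<in> Cnon mult) < length a"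
      by (rule LeastI2_ex) blast
    moreover have "gamma mult res a b = Suc (LEAST i. i < length a \<and> res (a ! i) (b ! i) \<in> Cnon mult)"
      unfolding gamma_def using ex by (rule if_P)
    ultimately show False using assms(7) la by linarith
  qed
  have nod: "\<not> (\<exists>i<length a. le (mult (res (a ! i) (b ! i)) (b ! i)) (a ! i) \<and> mult (res (a ! i) (b ! i)) (b ! i) \<noteq> a ! i)"
  proof
    define P where "P = (\<lambda>i. i < length a \<and> le (mult (res (a ! i) (b ! i)) (b ! i)) (a ! i) \<and> mult (res (a ! i) (b ! i)) (b ! i) \<noteq> a ! i)"
    assume ex: "\<exists>i<length a. le (mult (res (a ! i) (b ! i)) (b ! i)) (a ! i) \<and> mult (res (a ! i) (b ! i)) (b ! i) \<noteq> a ! i"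
    then obtain i where Pi: "P i" unfolding P_def by blast
    then have "Least P \<le> i" by (rule Least_le)
    moreover have "i < length a" using Pi unfolding P_def by simp
    ultimately have lt: "Least P < length a" by simp
    have "delta le mult res a b = Suc (Least P)"
      unfolding delta_def Let_def P_def using ex by (rule if_P)
    then show False using lt assms(6) la by linarith
  qed
  have comp: "\<forall>i<length a. mult (res (a!i) (b!i)) (b!i) = a!i \<and> res (a!i) (b!i) \<in> Icanc mult"
  proof (intro allI impI conjI)
    fix i assume i: "i < length a"
    have "le (mult (b ! i) (res (a ! i) (b ! i))) (a ! i)"
      using resid[of "b!i" "res (a!i) (b!i)" "a!i"] refl[of "res (a!i) (b!i)"] by blast
    then have "le (mult (res (a ! i) (b ! i)) (b ! i)) (a ! i)" using comm[of "b!i" "res (a!i) (b!i)"] by simp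
    then show "mult (res (a!i) (b!i)) (b!i) = a!i" using nod i by blast
    show "res (a!i) (b!i) \<in> Icanc mult" using nog i unfolding Cnon_def by blast
  qed
  have setI: "set (map2 res a b) \<subseteq> Icanc mult"
  proof
    fix x assume "x \<in> set (map2 res a b)"
    then obtain i where i: "i < length (map2 res a b)" "x = map2 res a b ! i"
      by (auto simp: in_set_conv_nth)
    then have il: "i < length a" by simp
    have "x = res (a!i) (b!i)" using i la lb by simp
    then show "x \<in> Icanc mult" using comp il by blast
  qed
  have lm: "length (map2 res a b) = k" using la lb by simp
  have "map2 res a b \<in> Lex mult bt k" using Lex_allI[OF lm setI] .
  moreover have "\<forall>c \<in> Lex mult bt k. lexle le (map2 mult b c) a \<longleftrightarrow> lexle le c (map2 res a b)"
  proof
    fix c assume "c \<in> Lex mult bt k"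
    then have "length c = k" by (rule Lex_len)
    then show "lexle le (map2 mult b c) a \<longleftrightarrow> lexle le c (map2 res a b)"
    proof -
      have e1: "length b = length a" using la lb by simp
      have e2: "length c = length a" using la \<open>length c = k\<close> by simp
      show ?thesis using main[OF assms(1,2) e1 e2 comp Lex_Q[OF assms(4)] Lex_Q[OF assms(5)]] .
    qed
  qed
  ultimately show ?thesis by (rule conjI)
qed

end
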